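(* For every integer $k\ge 0$, \[ a_{k,n}=\operatorname{rk}H^{2k}(\overline{\mathcal M}_{0,n},\mathbb Q)\sim \frac{(k+1)^{k+n-1}}{(k+1)!}\quad\text{as } n\to\infty, \] i.e. the ratio of the two sides tends to $1$.
   Context: For $n\ge 3$, let $\overline{\mathcal M}_{0,n}$ be the moduli space of stable $n$-pointed rational curves over $\mathbb C$. Its class in $K(\mathrm{Var}_{\mathbb C})$ equals $P_n(\mathbb L)$ with $\mathbb L=[\mathbb A^1]$ and $P_n(t)=\sum_{k=0}^{n-3}a_{k,n}t^k\in\mathbb Z[t]$; $a_{k,n}=\operatorname{rk}H^{2k}(\overline{\mathcal M}_{0,n},\mathbb Q)$. Equivalently, $P_3(t)=1$ and for $n>3$, $P_n(t)=P_{n-1}(t)(1+t)+t\sum_{i=3}^{n-2}\binom{n-2}{i-1}P_i(t)P_{n+1-i}(t)$. *)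

theory Defs
  imports Complex_Main "HOL-Computational_Algebra.Polynomial" "HOL-Library.Landau_Symbols"
begin

text \<open>The Poincare polynomial P_n of the moduli space of stable n-pointed rational curves,
  given by Keel's recursion: P_3 = 1 and for n > 3
  P_n = P_(n-1) (1+t) + t * sum_(i=3)^(n-2) binom(n-2,i-1) P_i P_(n+1-i).
  Values for n < 3 are irrelevant (set to 1).\<close>
function M0n_poly :: "nat \<Rightarrow> int poly" where
  "M0n_poly n = (if n \<le> 3 then 1 else
     M0n_poly (n - 1) * [:1, 1:] +
     [:0, 1:] * (\<Sum>i\<in>{3..n-2}. of_int (int ((n - 2) choose (i - 1))) * M0n_poly i * M0n_poly (n + 1 - i)))"
  by auto
termination
  by (relation "measure id") auto

definition a_coeff :: "nat \<Rightarrow> nat \<Rightarrow> int" where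
  "a_coeff k n = coeff (M0n_poly n) k"

end

theory Submission
  imports Defs "HOL-Real_Asymp.Real_Asymp"
begin

lemma cX: "coeff ([:0,1:] * q) (Suc k) = coeff q k" "coeff ([:0,1:] * q) 0 = (0::int)"
  by (simp_all add: coeff_pCons)
lemma c1X: "coeff (p * [:1,1:]) (Suc k) = coeff p (Suc k) + coeff p k" "coeff (p * [:1,1:]) 0 = (coeff p 0::int)"
  by (simp_all add: mult.commute[of p] coeff_pCons)
lemma cofint: "coeff (of_int c * p) k = c * coeff p k"
  by (simp add: of_int_poly)
lemma cofnat: "coeff (of_nat c * p) k = of_nat c * (coeff p k :: int)"
  by (simp add: of_nat_poly)
lemma rec0: "coeff (M0n_poly n) 0 = 1"
proof (induction n rule: less_induct)
  case (less n)
  show ?case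
  proof (cases "n \<le> 3")
    case True then show ?thesis by (subst M0n_poly.simps) simp
  next
    case False
    then show ?thesis using less[of "n-1"] by (subst M0n_poly.simps) (simp add: c1X cX)
  qed
qed
lemma recS: assumes "\<not> n \<le> 3"
  shows "coeff (M0n_poly n) (Suc k) = coeff (M0n_poly (n-1)) (Suc k) + coeff (M0n_poly (n-1)) k
    + (\<Sum>i\<in>{3..n-2}. int ((n - 2) choose (i - 1)) * (\<Sum>j\<le>k. coeff (M0n_poly i) j * coeff (M0n_poly (n+1-i)) (k-j)))"
proof -
  have "coeff (M0n_poly n) (Suc k) = coeff (M0n_poly (n-1)) (Suc k) + coeff (M0n_poly (n-1)) k
    + (\<Sum>i\<in>{3..n-2}. int ((n - 2) choose (i - 1)) * coeff (M0n_poly i * M0n_poly (n+1-i)) k)"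
    using assms by (subst M0n_poly.simps) (simp del: M0n_poly.simps add: c1X cX coeff_sum cofint cofnat mult.assoc)
  then show ?thesis by (simp only: coeff_mult)
qed


lemma CC: assumes "a \<le> n" shows "(n choose a) * ((n - a) choose m) = (n choose m) * ((n - m) choose a)"
proof (cases "a + m \<le> n")
  case True
  have "(n choose (n-a)) * ((n - a) choose m) = (n choose m) * ((n - m) choose (n - a - m))"
    using choose_mult[of m "n-a" n] True by simp
  moreover have "n choose (n-a) = n choose a" using assms binomial_symmetric[of a n] by simp
  moreover have "(n - m) choose (n - a - m) = (n - m) choose a"
    using True binomial_symmetric[of a "n-m"] by (simp add: diff_diff_left add.commute)
  ultimately show ?thesis by simp
next
  case False
  then have "n - a < m" using assms by simp
  moreover have "n < m \<or> n - m < a" using False by auto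
  ultimately show ?thesis by (auto simp: binomial_eq_0)
qed

lemma pascal_diff:
  fixes h :: "nat \<Rightarrow> int"
  shows "(\<Sum>a\<le>Suc r. (-1)^a * of_nat (Suc r choose a) * h a)
       = (\<Sum>a\<le>r. (-1)^a * of_nat (r choose a) * (h a - h (Suc a)))"
proof -
  have "(\<Sum>a\<le>Suc r. (-1)^a * of_nat (Suc r choose a) * h a)
      = h 0 + (\<Sum>a\<le>r. (-1)^(Suc a) * of_nat (Suc r choose Suc a) * h (Suc a))"
    by (subst sum.atMost_Suc_shift) simp
  also have "\<dots> = h 0 + (\<Sum>a\<le>r. (-1)^(Suc a) * of_nat (r choose a) * h (Suc a))
           + (\<Sum>a\<le>r. (-1)^(Suc a) * of_nat (r choose Suc a) * h (Suc a))"
  proof -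
    have "(-1)^(Suc a) * of_nat (Suc r choose Suc a) * h (Suc a) = (-1)^(Suc a) * of_nat (r choose a) * h (Suc a)
       + (-1)^(Suc a) * of_nat (r choose Suc a) * h (Suc a)" for a
      by (simp add: algebra_simps)
    then show ?thesis by (simp only: sum.distrib add.assoc)
  qed
  finally have 1: "(\<Sum>a\<le>Suc r. (-1)^a * of_nat (Suc r choose a) * h a) = h 0 + (\<Sum>a\<le>r. (-1)^(Suc a) * of_nat (r choose a) * h (Suc a))
           + (\<Sum>a\<le>r. (-1)^(Suc a) * of_nat (r choose Suc a) * h (Suc a))" .
  have "h 0 + (\<Sum>a\<le>r. (-1)^(Suc a) * of_nat (r choose Suc a) * h (Suc a))
     = (\<Sum>a\<le>Suc r. (-1)^a * of_nat (r choose a) * h a)"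
    by (subst sum.atMost_Suc_shift[of _ r]) simp
  also have "\<dots> = (\<Sum>a\<le>r. (-1)^a * of_nat (r choose a) * h a)"
    by simp
  finally have 2: "h 0 + (\<Sum>a\<le>r. (-1)^(Suc a) * of_nat (r choose Suc a) * h (Suc a)) = (\<Sum>a\<le>r. (-1)^a * of_nat (r choose a) * h a)" .
  have 3: "(\<Sum>a\<le>r. (-1)^(Suc a) * of_nat (r choose a) * h (Suc a)) = - (\<Sum>a\<le>r. (-1)^a * of_nat (r choose a) * h (Suc a))"
    by (simp add: sum_negf[symmetric])
  have 4: "(\<Sum>a\<le>r. (-1)^a * of_nat (r choose a) * (h a - h (Suc a))) = (\<Sum>a\<le>r. (-1)^a * of_nat (r choose a) * h a) - (\<Sum>a\<le>r. (-1)^a * of_nat (r choose a) * h (Suc a))"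
    by (simp add: sum_subtractf right_diff_distrib)
  show ?thesis using 1 2 3 4 by linarith
qed

lemma findiff:
  "d < r \<Longrightarrow> (\<Sum>a\<le>r. (-1)^a * of_nat (r choose a) * (x + of_nat a)^d) = (0::int)"
proof (induction r arbitrary: d x)
  case 0
  then show ?case by simp
next
  case (Suc r)
  have ex: "(x + of_nat a)^d - (x + of_nat (Suc a))^d = - (\<Sum>e<d. of_nat (d choose e) * (x + of_nat a)^e)" for a
  proof -
    have "(x + of_nat (Suc a))^d = ((x + of_nat a) + 1)^d" by (simp add: algebra_simps)
    also have "\<dots> = (\<Sum>e\<le>d. of_nat (d choose e) * (x + of_nat a)^e)"
      by (subst binomial_ring) simp
    also have "\<dots> = (\<Sum>e<d. of_nat (d choose e) * (x + of_nat a)^e) + (x + of_nat a)^d"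
      by (simp add: lessThan_Suc_atMost[symmetric])
    finally show ?thesis by simp
  qed
  have "(\<Sum>a\<le>Suc r. (-1)^a * of_nat (Suc r choose a) * (x + of_nat a)^d)
     = (\<Sum>a\<le>r. (-1)^a * of_nat (r choose a) * ((x + of_nat a)^d - (x + of_nat (Suc a))^d))"
    by (rule pascal_diff)
  also have "\<dots> = - (\<Sum>e<d. of_nat (d choose e) * (\<Sum>a\<le>r. (-1)^a * of_nat (r choose a) * (x + of_nat a)^e))"
    by (simp only: ex sum_distrib_left sum_negf[symmetric] mult_minus_right sum.swap[of _ "{..<d}"]) (simp add: algebra_simps)
  also have "\<dots> = 0"
    using Suc by simp
  finally show ?case .
qed

lemma innerG:
  assumes "r \<le> n" "1 \<le> n"
  shows "(\<Sum>a\<in>{1..n}. int (r choose a) * (-1)^(r-a) * int a^(r-1)) = (if r = 1 then 1 else 0)"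
proof -
  consider "r = 0" | "r = 1" | "r \<ge> 2" by linarith
  then show ?thesis
  proof cases
    case 1 then show ?thesis by (auto intro!: sum.neutral)
  next
    case 2
    have "(\<Sum>a\<in>{1..n}. int (r choose a) * (-1)^(r-a) * int a^(r-1)) = (\<Sum>a\<in>{1}. int (r choose a) * (-1)^(r-a) * int a^(r-1))"
      by (rule sum.mono_neutral_right) (use assms 2 in auto)
    then show ?thesis using 2 by simp
  next
    case 3
    let ?f = "\<lambda>a. int (r choose a) * (-1)^(r-a) * int a^(r-1)"
    have "(\<Sum>a\<in>{1..n}. ?f a) = (\<Sum>a\<in>{0..n}. ?f a)"
      by (rule sum.mono_neutral_left) (use 3 in auto)
    also have "\<dots> = (\<Sum>a\<in>{0..r}. ?f a)"
      by (rule sum.mono_neutral_right) (use assms in \<open>auto simp: binomial_eq_0\<close>)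
    also have "\<dots> = (\<Sum>a\<le>r. (-1)^r * ((-1)^a * of_nat (r choose a) * (0 + of_nat a)^(r-1)))"
    proof (rule sum.cong)
      fix a assume "a \<in> {..r}"
      then have ar: "r = (r - a) + a" by simp
      have sq: "(-1::int)^a * (-1)^a = 1"
        by (simp add: power_add[symmetric])
      have "(-1::int)^r * (-1)^a = (-1)^(r-a) * ((-1)^a * (-1)^a)"
        by (subst ar) (simp only: power_add mult_ac)
      then have "(-1::int)^(r-a) = (-1)^r * (-1)^a" by (simp only: sq mult_1_right)
      then show "?f a = (-1)^r * ((-1)^a * of_nat (r choose a) * (0 + of_nat a)^(r-1))" by simp
    qed (simp add: atMost_atLeast0)
    also have "\<dots> = 0"
      using findiff[of "r-1" r 0] 3 by (simp add: sum_distrib_left[symmetric])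
    finally show ?thesis using 3 by simp
  qed
qed

lemma identityI:
  assumes "1 \<le> n"
  shows "(\<Sum>a\<in>{1..n}. int (n choose a) * int a^(a-1) * int (n-a)^(n-a)) = int n ^ n"
proof -
  define T where "T a m = int ((n-a) choose m) * int n^m * (-1)^(n-a-m) * int a^(n-m-1)" for a m
  have E1: "int a^(a-1) * int (n-a)^(n-a) = (\<Sum>m\<le>n. T a m)" if a: "a \<in> {1..n}" for a
  proof -
    have "int (n-a) = int n + (- int a)" using a by simp
    moreover have "(int n + (- int a))^(n-a) = (\<Sum>m\<le>n-a. int ((n-a) choose m) * int n^m * (- int a)^(n-a-m))"
      by (rule binomial_ring)
    ultimately have "int (n-a)^(n-a) = (\<Sum>m\<le>n-a. int ((n-a) choose m) * int n^m * (- int a)^(n-a-m))"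
      by simp
    then have "int a^(a-1) * int (n-a)^(n-a) = (\<Sum>m\<le>n-a. int a^(a-1) * (int ((n-a) choose m) * int n^m * (- int a)^(n-a-m)))"
      by (simp add: sum_distrib_left)
    also have "\<dots> = (\<Sum>m\<le>n-a. T a m)"
    proof (rule sum.cong)
      fix m assume m: "m \<in> {..n-a}"
      have e: "a - 1 + (n - a - m) = n - m - 1" using a m by auto
      have "int a^(a-1) * (- int a)^(n-a-m) = (-1)^(n-a-m) * int a^(a - 1 + (n-a-m))"
        by (simp only: power_minus[of "int a"] power_add mult_ac)
      then have pm: "int a^(a-1) * (- int a)^(n-a-m) = (-1)^(n-a-m) * int a^(n-m-1)"
        by (simp only: e)
      have "int a^(a-1) * (int ((n-a) choose m) * int n^m * (- int a)^(n-a-m)) = int ((n-a) choose m) * int n^m * (int a^(a-1) * (- int a)^(n-a-m))"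
        by (simp only: mult_ac)
      also have "\<dots> = int ((n-a) choose m) * int n^m * ((-1)^(n-a-m) * int a^(n-m-1))"
        by (simp only: pm)
      finally show "int a^(a-1) * (int ((n-a) choose m) * int n^m * (- int a)^(n-a-m)) = T a m"
        unfolding T_def by (simp only: mult_ac)
    qed simp
    also have "\<dots> = (\<Sum>m\<le>n. T a m)"
      by (rule sum.mono_neutral_left) (auto simp: T_def binomial_eq_0)
    finally show ?thesis .
  qed
  have "(\<Sum>a\<in>{1..n}. int (n choose a) * int a^(a-1) * int (n-a)^(n-a))
      = (\<Sum>a\<in>{1..n}. \<Sum>m\<le>n. int (n choose a) * T a m)"
  proof (rule sum.cong[OF refl])
    fix a assume a: "a \<in> {1..n}"
    have "int (n choose a) * int a^(a-1) * int (n-a)^(n-a) = int (n choose a) * (int a^(a-1) * int (n-a)^(n-a))"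
      by (simp only: mult.assoc)
    also have "\<dots> = int (n choose a) * (\<Sum>m\<le>n. T a m)" by (simp only: E1[OF a])
    finally show "int (n choose a) * int a^(a-1) * int (n-a)^(n-a) = (\<Sum>m\<le>n. int (n choose a) * T a m)"
      by (simp only: sum_distrib_left)
  qed
  also have "\<dots> = (\<Sum>m\<le>n. \<Sum>a\<in>{1..n}. int (n choose a) * T a m)"
    by (rule sum.swap)
  also have "\<dots> = (\<Sum>m\<le>n. int n^m * int (n choose m) * (\<Sum>a\<in>{1..n}. int ((n-m) choose a) * (-1)^((n-m)-a) * int a^((n-m)-1)))"
  proof (rule sum.cong[OF refl])
    fix m assume "m \<in> {..n}"
    show "(\<Sum>a\<in>{1..n}. int (n choose a) * T a m) = int n^m * int (n choose m) * (\<Sum>a\<in>{1..n}. int ((n-m) choose a) * (-1)^((n-m)-a) * int a^((n-m)-1))"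
      unfolding sum_distrib_left
    proof (rule sum.cong[OF refl])
      fix a assume a: "a \<in> {1..n}"
      have cc: "int (n choose a) * int ((n-a) choose m) = int (n choose m) * int ((n-m) choose a)"
        using CC[of a n m] a by (metis atLeastAtMost_iff of_nat_mult)
      have e: "n - a - m = n - m - a" by (simp add: diff_commute)
      have "int (n choose a) * T a m = (int (n choose a) * int ((n-a) choose m)) * (int n^m * (-1)^(n-m-a) * int a^(n-m-1))"
        unfolding T_def e by (simp only: mult_ac)
      also have "\<dots> = (int (n choose m) * int ((n-m) choose a)) * (int n^m * (-1)^(n-m-a) * int a^(n-m-1))"
        by (simp only: cc)
      finally show "int (n choose a) * T a m = int n^m * int (n choose m) * (int ((n-m) choose a) * (-1)^((n-m)-a) * int a^((n-m)-1))"
        by (simp only: mult_ac)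
    qed
  qed
  also have "\<dots> = (\<Sum>m\<le>n. if m = n - 1 then int n^m * int (n choose m) else 0)"
  proof (rule sum.cong[OF refl])
    fix m assume "m \<in> {..n}"
    then show "int n^m * int (n choose m) * (\<Sum>a\<in>{1..n}. int ((n-m) choose a) * (-1)^((n-m)-a) * int a^((n-m)-1)) = (if m = n - 1 then int n^m * int (n choose m) else 0)"
      using innerG[of "n-m" n] assms by auto
  qed
  also have "\<dots> = int n^(n-1) * int n"
    using assms binomial_symmetric[of 1 n] by (simp add: sum.delta')
  also have "\<dots> = int n ^ n"
    using assms by (metis Suc_diff_le diff_Suc_1 mult.commute power_Suc)
  finally show ?thesis .
qed



lemma weight_tail:
  fixes p q :: real
  assumes "0 < p" "0 < q" "q < 1"
  shows "(\<lambda>N. real (N choose s) * p^s * q^(N-s)) \<longlonglongrightarrow> 0"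
proof (rule tendsto_sandwich[of "\<lambda>_. 0" _ _ "\<lambda>N. (p/q)^s * real N ^ s * q^N"])
  show "\<forall>\<^sub>F N in sequentially. 0 \<le> real (N choose s) * p^s * q^(N-s)"
    using assms by simp
  show "\<forall>\<^sub>F N in sequentially. real (N choose s) * p^s * q^(N-s) \<le> (p/q)^s * real N ^ s * q^N"
  proof (rule eventually_sequentiallyI[of s])
    fix N assume N: "s \<le> N"
    have "real (N choose s) \<le> real N ^ s"
      using binomial_le_pow[OF N] by (metis of_nat_le_iff of_nat_power)
    moreover have "q^(N-s) = q^N / q^s" using power_diff[of q s N] N assms by simp
    ultimately have "real (N choose s) * (p^s * (q^N / q^s)) \<le> real N ^ s * (p^s * (q^N / q^s))"
      using assms by (intro mult_right_mono) auto
    then show "real (N choose s) * p^s * q^(N-s) \<le> (p/q)^s * real N ^ s * q^N"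
      using \<open>q^(N-s) = q^N / q^s\<close> by (simp add: power_divide mult_ac)
  qed
  show "(\<lambda>N. (p/q)^s * real N ^ s * q^N) \<longlonglongrightarrow> 0"
    using assms by real_asymp
qed simp

lemma weight_sum:
  fixes p q :: real
  assumes "p + q = 1"
  shows "(\<Sum>s\<le>N. real (N choose s) * p^s * q^(N-s)) = 1"
  using binomial_ring[of p q N] assms by simp

lemma weight_null:
  fixes p q :: real and u :: "nat \<Rightarrow> real"
  assumes pq: "0 < p" "0 < q" "p + q = 1" and u: "u \<longlonglongrightarrow> 0"
  shows "(\<lambda>N. \<Sum>s\<le>N. real (N choose s) * p^s * q^(N-s) * u s) \<longlonglongrightarrow> 0"
proof (rule LIMSEQ_I)
  fix e :: real assume e: "0 < e"
  define w where "w N s = real (N choose s) * p^s * q^(N-s)" for N s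
  have w0: "w N s \<ge> 0" for N s using pq by (simp add: w_def)
  have q1: "q < 1" using pq by simp
  obtain U where U: "0 < U" "\<forall>s. norm (u s) \<le> U"
    using u by (metis BseqE convergent_def convergent_imp_Bseq)
  obtain M where M: "\<forall>s\<ge>M. norm (u s - 0) < e/2"
    using LIMSEQ_D[OF u, of "e/2"] e by auto
  have "(\<lambda>N. \<Sum>s<M. w N s) \<longlonglongrightarrow> 0"
    unfolding w_def by (rule tendsto_null_sum) (rule weight_tail[OF pq(1,2) q1])
  then obtain N0 where N0: "\<forall>N\<ge>N0. norm ((\<Sum>s<M. w N s) - 0) < e / (2*U)"
    using LIMSEQ_D[of _ 0 "e/(2*U)"] e U by (metis divide_pos_pos mult_pos_pos zero_less_numeral)
  show "\<exists>no. \<forall>N\<ge>no. norm ((\<Sum>s\<le>N. real (N choose s) * p^s * q^(N-s) * u s) - 0) < e"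
  proof (intro exI allI impI)
    fix N assume N: "N \<ge> N0"
    have bnd: "norm (u s) \<le> (if s < M then U else 0) + e/2" for s
      using U M[rule_format, of s] e by (cases "s < M") (auto intro: order_trans[of _ U])
    have "norm (\<Sum>s\<le>N. w N s * u s) \<le> (\<Sum>s\<le>N. w N s * norm (u s))"
      by (rule order_trans[OF norm_sum]) (simp add: abs_mult w0)
    also have "\<dots> \<le> (\<Sum>s\<le>N. w N s * ((if s < M then U else 0) + e/2))"
      by (rule sum_mono, rule mult_left_mono[OF bnd w0])
    also have "\<dots> = (\<Sum>s\<le>N. w N s * (if s < M then U else 0)) + e/2 * (\<Sum>s\<le>N. w N s)"
      by (simp add: distrib_left sum.distrib sum_distrib_left mult_ac)
    also have "(\<Sum>s\<le>N. w N s * (if s < M then U else 0)) = U * (\<Sum>s\<in>{..N} \<inter> {..<M}. w N s)"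
    proof -
      have "{..N} \<inter> {..<M} = {s\<in>{..N}. s < M}" by auto
      moreover have "(\<Sum>s\<in>{s\<in>{..N}. s < M}. U * w N s) = (\<Sum>s\<le>N. if s < M then U * w N s else 0)"
        by (rule sum.inter_filter) simp
      moreover have "(\<Sum>s\<le>N. w N s * (if s < M then U else 0)) = (\<Sum>s\<le>N. if s < M then U * w N s else 0)"
        by (rule sum.cong) auto
      ultimately show ?thesis by (simp add: sum_distrib_left)
    qed
    also have "(\<Sum>s\<le>N. w N s) = 1" unfolding w_def by (rule weight_sum[OF pq(3)])
    also have "(\<Sum>s\<in>{..N} \<inter> {..<M}. w N s) \<le> (\<Sum>s<M. w N s)"
      by (rule sum_mono2) (auto simp: w0)
    also have "(\<Sum>s<M. w N s) < e / (2*U)"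
      using N0[rule_format, OF N] by simp
    finally have "norm (\<Sum>s\<le>N. w N s * u s) < U * (e/(2*U)) + e/2 * 1"
      using U by (simp add: mult_strict_left_mono)
    also have "\<dots> = e" using U by simp
    finally show "norm ((\<Sum>s\<le>N. real (N choose s) * p^s * q^(N-s) * u s) - 0) < e"
      by (simp add: w_def)
  qed
qed

lemma sum_atMost_rev: "(\<Sum>s\<le>N. h s) = (\<Sum>s\<le>N. h (N - s))" for h :: "nat \<Rightarrow> real"
  by (rule sum.reindex_bij_witness[where i="\<lambda>s. N - s" and j="\<lambda>s. N - s"]) auto

lemma weight_null_rev:
  fixes p q :: real and v :: "nat \<Rightarrow> real"
  assumes pq: "0 < p" "0 < q" "p + q = 1" and v: "v \<longlonglongrightarrow> 0"
  shows "(\<lambda>N. \<Sum>s\<le>N. real (N choose s) * p^s * q^(N-s) * v (N - s)) \<longlonglongrightarrow> 0"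
proof -
  have "(\<Sum>s\<le>N. real (N choose s) * p^s * q^(N-s) * v (N - s)) = (\<Sum>s\<le>N. real (N choose s) * q^s * p^(N-s) * v s)" for N
  proof -
    have "(\<Sum>s\<le>N. real (N choose s) * p^s * q^(N-s) * v (N - s)) = (\<Sum>s\<le>N. real (N choose (N-s)) * p^(N-s) * q^(N-(N-s)) * v (N - (N-s)))"
      by (rule sum_atMost_rev)
    also have "\<dots> = (\<Sum>s\<le>N. real (N choose s) * q^s * p^(N-s) * v s)"
      by (rule sum.cong) (auto simp: binomial_symmetric[symmetric] mult_ac)
    finally show ?thesis .
  qed
  then show ?thesis using weight_null[of q p v] pq v by (simp add: add.commute)
qed

lemma conv_pq:
  fixes p q :: real and f g :: "nat \<Rightarrow> real"
  assumes pq: "0 < p" "0 < q" "p + q = 1" and f: "f \<longlonglongrightarrow> A" and g: "g \<longlonglongrightarrow> B"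
  shows "(\<lambda>N. \<Sum>s\<le>N. real (N choose s) * p^s * q^(N-s) * (f s * g (N - s))) \<longlonglongrightarrow> A * B"
proof -
  define w where "w N s = real (N choose s) * p^s * q^(N-s)" for N s
  have w0: "w N s \<ge> 0" for N s using pq by (simp add: w_def)
  obtain G where G: "0 < G" "\<forall>s. norm (g s) \<le> G"
    using g by (metis BseqE convergent_def convergent_imp_Bseq)
  have f0: "(\<lambda>s. \<bar>f s - A\<bar>) \<longlonglongrightarrow> 0"
    using f by (simp add: LIM_zero tendsto_rabs_zero)
  have g0: "(\<lambda>s. \<bar>g s - B\<bar>) \<longlonglongrightarrow> 0"
    using g by (simp add: LIM_zero tendsto_rabs_zero)
  have R: "(\<lambda>N. G * (\<Sum>s\<le>N. w N s * \<bar>f s - A\<bar>) + \<bar>A\<bar> * (\<Sum>s\<le>N. w N s * \<bar>g (N-s) - B\<bar>)) \<longlonglongrightarrow> G * 0 + \<bar>A\<bar> * 0"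
    unfolding w_def
    by (intro tendsto_add tendsto_mult tendsto_const weight_null[OF pq f0] weight_null_rev[OF pq g0])
  have D: "(\<lambda>N. (\<Sum>s\<le>N. w N s * (f s * g (N - s))) - A * B) \<longlonglongrightarrow> 0"
  proof -
    have R0: "(\<lambda>N. G * (\<Sum>s\<le>N. w N s * \<bar>f s - A\<bar>) + \<bar>A\<bar> * (\<Sum>s\<le>N. w N s * \<bar>g (N-s) - B\<bar>)) \<longlonglongrightarrow> 0"
      using R by simp
    have "norm ((\<Sum>s\<le>N. w N s * (f s * g (N - s))) - A * B) \<le> norm (G * (\<Sum>s\<le>N. w N s * \<bar>f s - A\<bar>) + \<bar>A\<bar> * (\<Sum>s\<le>N. w N s * \<bar>g (N-s) - B\<bar>)) * 1" for N
    proof -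
    have "(\<Sum>s\<le>N. w N s * (f s * g (N - s))) - A * B = (\<Sum>s\<le>N. w N s * (f s * g (N - s) - A * B))"
      using weight_sum[OF pq(3), of N] by (simp add: w_def sum_subtractf right_diff_distrib sum_distrib_right[symmetric])
    also have "norm \<dots> \<le> (\<Sum>s\<le>N. w N s * (G * \<bar>f s - A\<bar> + \<bar>A\<bar> * \<bar>g (N-s) - B\<bar>))"
    proof (rule order_trans[OF norm_sum], rule sum_mono)
      fix s
      have "f s * g (N - s) - A * B = (f s - A) * g (N-s) + A * (g (N-s) - B)" by algebra
      then have "\<bar>f s * g (N - s) - A * B\<bar> \<le> \<bar>f s - A\<bar> * \<bar>g (N-s)\<bar> + \<bar>A\<bar> * \<bar>g (N-s) - B\<bar>"
        by (simp add: abs_mult[symmetric] abs_triangle_ineq)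
      also have "\<dots> \<le> G * \<bar>f s - A\<bar> + \<bar>A\<bar> * \<bar>g (N-s) - B\<bar>"
        using G(2) mult_left_mono[of "\<bar>g (N-s)\<bar>" G "\<bar>f s - A\<bar>"] by (simp add: mult.commute)
      finally show "norm (w N s * (f s * g (N - s) - A * B)) \<le> w N s * (G * \<bar>f s - A\<bar> + \<bar>A\<bar> * \<bar>g (N-s) - B\<bar>)"
        using w0[of N s] by (simp add: abs_mult mult_left_mono)
    qed
    also have "\<dots> = G * (\<Sum>s\<le>N. w N s * \<bar>f s - A\<bar>) + \<bar>A\<bar> * (\<Sum>s\<le>N. w N s * \<bar>g (N-s) - B\<bar>)"
      by (simp add: sum.distrib sum_distrib_left distrib_left mult_ac)
    also have "\<dots> \<le> norm (G * (\<Sum>s\<le>N. w N s * \<bar>f s - A\<bar>) + \<bar>A\<bar> * (\<Sum>s\<le>N. w N s * \<bar>g (N-s) - B\<bar>)) * 1"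
      by simp
    finally show ?thesis .
    qed
    then show ?thesis by (intro tendsto_0_le[OF R0 always_eventually, where K=1]) auto
  qed
  have "(\<lambda>N. ((\<Sum>s\<le>N. w N s * (f s * g (N - s))) - A * B) + A * B) \<longlonglongrightarrow> 0 + A * B"
    by (intro tendsto_add D tendsto_const)
  then show ?thesis by (simp add: w_def)
qed

lemma conv_lim:
  fixes \<alpha> \<beta> :: real and f g :: "nat \<Rightarrow> real"
  assumes "0 < \<alpha>" "0 < \<beta>" and f: "f \<longlonglongrightarrow> A" and g: "g \<longlonglongrightarrow> B"
  shows "(\<lambda>N. \<Sum>s\<le>N. real (N choose s) * \<alpha>^s * \<beta>^(N-s) / (\<alpha>+\<beta>)^N * (f s * g (N - s))) \<longlonglongrightarrow> A * B"
proof -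
  let ?p = "\<alpha>/(\<alpha>+\<beta>)" and ?q = "\<beta>/(\<alpha>+\<beta>)"
  have pq: "0 < ?p" "0 < ?q" "?p + ?q = 1" using assms by (auto simp: add_divide_distrib[symmetric])
  have "real (N choose s) * \<alpha>^s * \<beta>^(N-s) / (\<alpha>+\<beta>)^N = real (N choose s) * ?p^s * ?q^(N-s)" if "s \<le> N" for N s
  proof -
    have "(\<alpha>+\<beta>)^N = (\<alpha>+\<beta>)^s * (\<alpha>+\<beta>)^(N-s)" using that by (simp add: power_add[symmetric])
    then show ?thesis by (simp add: power_divide)
  qed
  then have "(\<Sum>s\<le>N. real (N choose s) * \<alpha>^s * \<beta>^(N-s) / (\<alpha>+\<beta>)^N * (f s * g (N - s)))
     = (\<Sum>s\<le>N. real (N choose s) * ?p^s * ?q^(N-s) * (f s * g (N - s)))" for N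
    by (intro sum.cong) auto
  then show ?thesis using conv_pq[OF pq f g] by simp
qed

lemma lin_rec:
  fixes x t :: "nat \<Rightarrow> real"
  assumes r: "0 \<le> r" "r < 1" and rec: "\<And>n. x (Suc n) = r * x n + t n" and t: "t \<longlonglongrightarrow> T"
  shows "x \<longlonglongrightarrow> T / (1 - r)"
proof (rule LIMSEQ_I)
  fix e :: real assume e: "0 < e"
  define L where "L = T / (1 - r)"
  have L: "L = r * L + T" using r by (simp add: L_def field_simps)
  define y where "y n = x n - L" for n
  have yrec: "y (Suc n) = r * y n + (t n - T)" for n
    unfolding y_def rec by (subst L) (simp add: algebra_simps)
  obtain N0 where N0: "\<forall>n\<ge>N0. norm (t n - T) < e * (1 - r) / 2"
    using LIMSEQ_D[OF t, of "e * (1 - r) / 2"] e r by auto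
  have cl: "\<bar>y (N0 + m)\<bar> \<le> r^m * \<bar>y N0\<bar> + e/2" for m
  proof (induction m)
    case 0 then show ?case using e by simp
  next
    case (Suc m)
    have "\<bar>y (N0 + Suc m)\<bar> \<le> r * \<bar>y (N0 + m)\<bar> + \<bar>t (N0 + m) - T\<bar>"
      using yrec[of "N0 + m"] r by (simp add: abs_mult abs_triangle_ineq order_trans[OF abs_triangle_ineq])
    also have "\<dots> \<le> r * (r^m * \<bar>y N0\<bar> + e/2) + e * (1 - r) / 2"
      using Suc N0[rule_format, of "N0 + m"] r by (intro add_mono mult_left_mono) auto
    also have "\<dots> = r^Suc m * \<bar>y N0\<bar> + e/2" by (simp add: algebra_simps add_divide_distrib diff_divide_distrib)
    finally show ?case .
  qed
  have "(\<lambda>m. r^m * \<bar>y N0\<bar>) \<longlonglongrightarrow> 0 * \<bar>y N0\<bar>"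
    using r by (intro tendsto_mult LIMSEQ_power_zero tendsto_const) simp
  then obtain M where M: "\<forall>m\<ge>M. norm (r^m * \<bar>y N0\<bar> - 0) < e/2"
    using LIMSEQ_D[of _ 0 "e/2"] e by fastforce
  show "\<exists>no. \<forall>n\<ge>no. norm (x n - T / (1 - r)) < e"
  proof (intro exI allI impI)
    fix n assume n: "n \<ge> N0 + M"
    then have "n = N0 + (n - N0)" by simp
    then have "\<bar>y n\<bar> \<le> r^(n-N0) * \<bar>y N0\<bar> + e/2" using cl[of "n - N0"] by simp
    moreover have "r^(n-N0) * \<bar>y N0\<bar> < e/2" using M[rule_format, of "n - N0"] n r by simp
    ultimately show "norm (x n - T / (1 - r)) < e" by (simp add: y_def L_def)
  qed
qed



declare M0n_poly.simps[simp del]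

definition A :: "nat \<Rightarrow> nat \<Rightarrow> real" where "A k n = real_of_int (a_coeff k n)"
definition c :: "nat \<Rightarrow> real" where "c k = (real k + 1)^k / fact (k+1) / (real k + 1)"

lemma A0: "A 0 n = 1"
  by (simp add: A_def a_coeff_def rec0)

lemma recR: assumes "4 \<le> n"
  shows "A (Suc k) n = A (Suc k) (n-1) + A k (n-1)
    + (\<Sum>i\<in>{3..n-2}. real ((n - 2) choose (i - 1)) * (\<Sum>j\<le>k. A j i * A (k-j) (n+1-i)))"
proof -
  have "\<not> n \<le> 3" using assms by simp
  from recS[OF this, of k] show ?thesis
    unfolding A_def a_coeff_def by (simp add: of_int_sum)
qed

lemma reidx:
  fixes h :: "nat \<Rightarrow> real"
  shows "(\<Sum>i\<in>{3..m+2}. real ((m+2) choose (i - 1)) * h i)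
       = (\<Sum>s\<le>m+2. real ((m+2) choose s) * (if 2 \<le> s \<and> s < m+2 then h (s+1) else 0))"
proof -
  have "(\<Sum>i\<in>{3..m+2}. real ((m+2) choose (i - 1)) * h i) = (\<Sum>s\<in>{2..m+1}. real ((m+2) choose s) * h (s+1))"
    using sum.shift_bounds_cl_Suc_ivl[of "\<lambda>i. real ((m+2) choose (i - 1)) * h i" 2 "m+1"]
    by (simp add: numeral_3_eq_3 eval_nat_numeral)
  also have "\<dots> = (\<Sum>s\<in>{s\<in>{..m+2}. 2 \<le> s \<and> s < m+2}. real ((m+2) choose s) * h (s+1))"
    by (rule sum.cong) auto
  also have "\<dots> = (\<Sum>s\<le>m+2. if 2 \<le> s \<and> s < m+2 then real ((m+2) choose s) * h (s+1) else 0)"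
    by (rule sum.inter_filter) simp
  also have "\<dots> = (\<Sum>s\<le>m+2. real ((m+2) choose s) * (if 2 \<le> s \<and> s < m+2 then h (s+1) else 0))"
    by (rule sum.cong) auto
  finally show ?thesis .
qed

lemma alg:
  fixes a b K C X Y :: real
  assumes "a > 0" "b > 0" "K > 0"
  shows "C * (X * Y) / (K^N * K^2) = (a * b^2 / K^2) * (C * a^s * b^m / K^N * ((X / (a^s * a)) * (Y / (b^m * b^2))))"
  using assms by (simp add: field_simps)

lemma termeq:
  fixes k j N s :: nat
  assumes "j \<le> k" "s \<le> N"
  defines "\<alpha> \<equiv> real j + 1" and "\<beta> \<equiv> real (k - j) + 1"
  shows "real (N choose s) * (if 2 \<le> s \<and> s < N then A j (s+1) * A (k-j) (N-s+2) else 0) / (real k + 2)^(N+2)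
    = (\<alpha> * \<beta>^2 / (real k + 2)^2) * (real (N choose s) * \<alpha>^s * \<beta>^(N-s) / (\<alpha>+\<beta>)^N *
        (((if 2 \<le> s then A j (s+1) else 0) / \<alpha>^(s+1)) * ((if 1 \<le> N - s then A (k-j) (N-s+2) else 0) / \<beta>^(N-s+2))))"
proof -
  have ab: "\<alpha> + \<beta> = real k + 2" using assms(1) by (simp add: \<alpha>_def \<beta>_def of_nat_diff)
  have pos: "\<alpha> > 0" "\<beta> > 0" by (simp_all add: \<alpha>_def \<beta>_def add_pos_nonneg)
  show ?thesis
  proof (cases "2 \<le> s \<and> s < N")
    case True
    then have "1 \<le> N - s" by linarith
    have K: "real k + 2 > 0" by simp
    have "(real k + 2)^(N+2) = (real k + 2)^N * (real k + 2)^2" by (simp only: power_add)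
    moreover have "\<alpha>^(s+1) = \<alpha>^s * \<alpha>" by simp
    moreover have "\<beta>^(N-s+2) = \<beta>^(N-s) * \<beta>^2" by (simp only: power_add)
    ultimately show ?thesis using True \<open>1 \<le> N - s\<close> alg[OF pos K, of "real (N choose s)" "A j (s+1)" "A (k-j) (N-s+2)" N s "N-s"]
      by (simp only: ab if_True if_False simp_thms)
  next
    case False
    then show ?thesis using assms(2) by auto
  qed
qed

lemma abel_real:
  "(\<Sum>j\<le>k. (real j + 1) * (real (k-j) + 1)^2 / (real k + 2)^2 * (c j * c (k-j)))
    = c (Suc k) * (1 - 1 / (real k + 2))"
proof -
  define K where "K = real k + 2"
  have K0: "K > 0" by (simp add: K_def)
  have I: "(\<Sum>a\<in>{1..Suc (Suc k)}. int (Suc (Suc k) choose a) * int a^(a-1) * int (Suc (Suc k)-a)^(Suc (Suc k)-a)) = int (Suc (Suc k)) ^ Suc (Suc k)"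
    by (rule identityI) simp
  have "(\<Sum>a\<in>{1..Suc (Suc k)}. int (Suc (Suc k) choose a) * int a^(a-1) * int (Suc (Suc k)-a)^(Suc (Suc k)-a))
     = (\<Sum>a\<in>{Suc 0..Suc k}. int (Suc (Suc k) choose a) * int a^(a-1) * int (Suc (Suc k)-a)^(Suc (Suc k)-a)) + int (Suc (Suc k))^(Suc k)"
    by simp
  also have "(\<Sum>a\<in>{Suc 0..Suc k}. int (Suc (Suc k) choose a) * int a^(a-1) * int (Suc (Suc k)-a)^(Suc (Suc k)-a))
     = (\<Sum>j\<in>{0..k}. int (Suc (Suc k) choose Suc j) * int (Suc j)^j * int (Suc (k-j))^(Suc (k-j)))"
    by (subst sum.shift_bounds_cl_Suc_ivl) (rule sum.cong, auto simp: Suc_diff_le)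
  finally have I2: "(\<Sum>j\<le>k. int (Suc (Suc k) choose Suc j) * int (Suc j)^j * int (Suc (k-j))^(Suc (k-j)))
      = int (Suc (Suc k)) ^ Suc (Suc k) - int (Suc (Suc k))^(Suc k)"
    using I by (simp add: atMost_atLeast0)
  have R: "(\<Sum>j\<le>k. real (Suc (Suc k) choose Suc j) * (real j + 1)^j * (real (k-j) + 1)^(Suc (k-j)))
      = K ^ Suc (Suc k) - K^(Suc k)"
  proof -
    have "real_of_int (\<Sum>j\<le>k. int (Suc (Suc k) choose Suc j) * int (Suc j)^j * int (Suc (k-j))^(Suc (k-j)))
      = real_of_int (int (Suc (Suc k)) ^ Suc (Suc k) - int (Suc (Suc k))^(Suc k))"
      using I2 by simp
    then show ?thesis by (simp add: K_def of_int_sum add.commute)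
  qed
  have T: "(real j + 1) * (real (k-j) + 1)^2 / K^2 * (c j * c (k-j))
     = real (Suc (Suc k) choose Suc j) * (real j + 1)^j * (real (k-j) + 1)^(Suc (k-j)) / (fact (Suc (Suc k)) * K^2)"
    if j: "j \<le> k" for j
  proof -
    have b: "real (Suc (Suc k) choose Suc j) = fact (Suc (Suc k)) / (fact (Suc j) * fact (Suc (k - j)))"
      using binomial_fact[of "Suc j" "Suc (Suc k)"] j by (simp add: Suc_diff_le)
    have f1: "(fact (Suc j) :: real) > 0" "(fact (Suc (k-j)) :: real) > 0" by simp_all
    have g: "u * v^2 / K^2 * (u^a / Fj / u * (v^b / Fl / v)) = Fk / (Fj * Fl) * u^a * v^(Suc b) / (Fk * K^2)"
      if "u > 0" "v > 0" "K > 0" "Fj > 0" "Fl > 0" "Fk > 0" for u v K Fj Fl Fk :: real and a b :: nat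
      using that by (simp add: field_simps power2_eq_square)
    have "c j = (real j + 1)^j / fact (Suc j) / (real j + 1)" "c (k-j) = (real (k-j) + 1)^(k-j) / fact (Suc (k-j)) / (real (k-j) + 1)"
      by (simp_all add: c_def)
    then show ?thesis unfolding b
      using g[of "real j + 1" "real (k-j) + 1" K "fact (Suc j)" "fact (Suc (k-j))" "fact (Suc (Suc k))" j "k-j"] K0 f1
      by (simp only:) (simp add: add_pos_nonneg)
  qed
  have "(\<Sum>j\<le>k. (real j + 1) * (real (k-j) + 1)^2 / (real k + 2)^2 * (c j * c (k-j)))
     = (\<Sum>j\<le>k. real (Suc (Suc k) choose Suc j) * (real j + 1)^j * (real (k-j) + 1)^(Suc (k-j)) / (fact (Suc (Suc k)) * K^2))"
    by (rule sum.cong[OF refl]) (simp only: atMost_iff T[unfolded K_def] K_def)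
  also have "\<dots> = (K ^ Suc (Suc k) - K^(Suc k)) / (fact (Suc (Suc k)) * K^2)"
    by (simp only: sum_divide_distrib[symmetric] R)
  also have "\<dots> = c (Suc k) * (1 - 1 / (real k + 2))"
    unfolding c_def K_def[symmetric] using K0
    by (simp add: K_def field_simps power2_eq_square)
  finally show ?thesis .
qed

lemma shiftF:
  assumes "(\<lambda>n. A j n / (real j + 1)^n) \<longlonglongrightarrow> L"
  shows "(\<lambda>s. (if d \<le> s then A j (s+e) else 0) / (real j + 1)^(s+e)) \<longlonglongrightarrow> L"
proof -
  have "(\<lambda>s. A j (s+e) / (real j + 1)^(s+e)) \<longlonglongrightarrow> L"
    using LIMSEQ_ignore_initial_segment[OF assms, of e] by simp
  moreover have "\<forall>\<^sub>F s in sequentially. A j (s+e) / (real j + 1)^(s+e) = (if d \<le> s then A j (s+e) else 0) / (real j + 1)^(s+e)"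
    by (rule eventually_sequentiallyI[of d]) simp
  ultimately show ?thesis by (rule Lim_transform_eventually)
qed

lemma main_lim: "(\<lambda>n. A K n / (real K + 1)^n) \<longlonglongrightarrow> c K"
proof (induction K rule: less_induct)
  case (less K)
  show ?case
  proof (cases K)
    case 0
    then show ?thesis by (simp add: A0 c_def)
  next
    case (Suc k)
    have IH: "(\<lambda>n. A j n / (real j + 1)^n) \<longlonglongrightarrow> c j" if "j \<le> k" for j
      using less[of j] that Suc by simp
    define KK where "KK = real k + 2"
    have KK0: "KK > 0" by (simp add: KK_def)
    define F where "F j s = (if 2 \<le> s then A j (s+1) else 0) / (real j + 1)^(s+1)" for j s
    define G where "G j m = (if 1 \<le> m then A (k-j) (m+2) else 0) / (real (k-j) + 1)^(m+2)" for j m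
    define Cv where "Cv j N = (\<Sum>s\<le>N. real (N choose s) * (real j + 1)^s * (real (k-j) + 1)^(N-s)
         / ((real j + 1) + (real (k-j) + 1))^N * (F j s * G j (N - s)))" for j N
    define t where "t m = A k (m+3) / KK^(m+4)
        + (\<Sum>j\<le>k. ((real j + 1) * (real (k-j) + 1)^2 / KK^2) * Cv j (m+2))" for m
    define x where "x m = A (Suc k) (m+3) / KK^(m+3)" for m
    define S where "S m = (\<Sum>s\<le>m+2. real ((m+2) choose s) * (if 2 \<le> s \<and> s < m+2
        then (\<Sum>j\<le>k. A j (s+1) * A (k-j) ((m+2)-s+2)) else 0))" for m
    have stepa: "A (Suc k) (m+4) = A (Suc k) (m+3) + A k (m+3) + S m" for m
    proof -
      have r: "A (Suc k) (m+4) = A (Suc k) (m+3) + A k (m+3)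
         + (\<Sum>i\<in>{3..m+2}. real ((m+2) choose (i - 1)) * (\<Sum>j\<le>k. A j i * A (k-j) (m+5-i)))"
        using recR[of "m+4" k] by (simp add: eval_nat_numeral)
      have "(\<Sum>i\<in>{3..m+2}. real ((m+2) choose (i - 1)) * (\<Sum>j\<le>k. A j i * A (k-j) (m+5-i)))
          = (\<Sum>s\<le>m+2. real ((m+2) choose s) * (if 2 \<le> s \<and> s < m+2 then (\<Sum>j\<le>k. A j (s+1) * A (k-j) (m+5-(s+1))) else 0))"
        by (rule reidx)
      also have "\<dots> = S m" unfolding S_def
      proof (rule sum.cong[OF refl])
        fix s assume "s \<in> {..m+2}"
        have "s < m + 2 \<Longrightarrow> m+5-(s+1) = (m+2)-s+2" by arith
        then show "real ((m+2) choose s) * (if 2 \<le> s \<and> s < m+2 then (\<Sum>j\<le>k. A j (s+1) * A (k-j) (m+5-(s+1))) else 0)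
          = real ((m+2) choose s) * (if 2 \<le> s \<and> s < m+2 then (\<Sum>j\<le>k. A j (s+1) * A (k-j) ((m+2)-s+2)) else 0)"
          by auto
      qed
      finally show ?thesis using r by simp
    qed
    have stepb: "S m / KK^(m+4) = (\<Sum>j\<le>k. ((real j + 1) * (real (k-j) + 1)^2 / KK^2) * Cv j (m+2))" for m
    proof -
      let ?N = "m+2"
      have "S m / KK^(m+4) = (\<Sum>s\<le>?N. \<Sum>j\<le>k. real (?N choose s) * (if 2 \<le> s \<and> s < ?N then A j (s+1) * A (k-j) (?N-s+2) else 0) / KK^(?N+2))"
        unfolding S_def sum_divide_distrib
        by (rule sum.cong[OF refl]) (auto simp: sum_distrib_left sum_divide_distrib eval_nat_numeral)
      also have "\<dots> = (\<Sum>j\<le>k. \<Sum>s\<le>?N. real (?N choose s) * (if 2 \<le> s \<and> s < ?N then A j (s+1) * A (k-j) (?N-s+2) else 0) / KK^(?N+2))"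
        by (rule sum.swap)
      also have "\<dots> = (\<Sum>j\<le>k. ((real j + 1) * (real (k-j) + 1)^2 / KK^2) * Cv j ?N)"
        unfolding Cv_def sum_distrib_left
      proof (intro sum.cong refl)
        fix j s assume j: "j \<in> {..k}" and s: "s \<in> {..?N}"
        show "real (?N choose s) * (if 2 \<le> s \<and> s < ?N then A j (s+1) * A (k-j) (?N-s+2) else 0) / KK^(?N+2)
          = (real j + 1) * (real (k-j) + 1)^2 / KK^2 * (real (?N choose s) * (real j + 1)^s * (real (k-j) + 1)^(?N-s)
         / ((real j + 1) + (real (k-j) + 1))^?N * (F j s * G j (?N - s)))"
          using termeq[of j k s ?N] j s unfolding F_def G_def KK_def by simp
      qed
      finally show ?thesis .
    qed
    have rec: "x (Suc m) = (1 / KK) * x m + t m" for m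
    proof -
      have "x (Suc m) = (A (Suc k) (m+3) + A k (m+3) + S m) / KK^(m+4)"
        unfolding x_def using stepa[of m] by (simp add: eval_nat_numeral)
      also have "\<dots> = (1/KK) * x m + (A k (m+3) / KK^(m+4) + S m / KK^(m+4))"
        unfolding x_def using KK0 by (simp add: add_divide_distrib eval_nat_numeral)
      finally show ?thesis unfolding t_def stepb by simp
    qed
    have tlim: "t \<longlonglongrightarrow> 0 + (\<Sum>j\<le>k. ((real j + 1) * (real (k-j) + 1)^2 / KK^2) * (c j * c (k-j)))"
    proof -
      have l1: "(\<lambda>m. A k (m+3) / KK^(m+4)) \<longlonglongrightarrow> 0"
      proof -
        have "(\<lambda>m. (A k (m+3) / (real k + 1)^(m+3)) * ((real k + 1) / KK)^(m+3) / KK) \<longlonglongrightarrow> c k * 0 / KK"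
          using KK0 by (intro tendsto_intros LIMSEQ_ignore_initial_segment[OF IH] LIMSEQ_power_zero[THEN LIMSEQ_ignore_initial_segment])
             (auto simp: KK_def)
        moreover have "(A k (m+3) / (real k + 1)^(m+3)) * ((real k + 1) / KK)^(m+3) / KK = A k (m+3) / KK^(m+4)" for m
        proof -
          have g: "a / b^n * (b/K)^n / K = a / (K^n * K)" if "b > 0" "K > 0" for a b K :: real and n :: nat
            using that by (simp add: power_divide)
          have "KK^(m+4) = KK^(m+3) * KK" by (simp add: eval_nat_numeral)
          then show ?thesis using g[of "real k + 1" KK "A k (m+3)" "m+3"] KK0 by simp
        qed
        ultimately show ?thesis by simp
      qed
      have l2: "(\<lambda>m. Cv j (m+2)) \<longlonglongrightarrow> c j * c (k-j)" if j: "j \<le> k" for j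
      proof -
        have "(\<lambda>N. Cv j N) \<longlonglongrightarrow> c j * c (k-j)"
          unfolding Cv_def
        proof (rule conv_lim)
          show "F j \<longlonglongrightarrow> c j" unfolding F_def using shiftF[OF IH[OF j], of 2 1] by simp
          show "G j \<longlonglongrightarrow> c (k-j)" unfolding G_def using shiftF[OF IH[of "k-j"], of 1 2] by simp
        qed simp_all
        then show ?thesis by (rule LIMSEQ_ignore_initial_segment)
      qed
      show ?thesis unfolding t_def
        by (intro tendsto_add l1 tendsto_sum tendsto_mult tendsto_const l2) simp
    qed
    have "x \<longlonglongrightarrow> (0 + (\<Sum>j\<le>k. ((real j + 1) * (real (k-j) + 1)^2 / KK^2) * (c j * c (k-j)))) / (1 - 1/KK)"
      by (rule lin_rec[OF _ _ rec tlim]) (use KK0 in \<open>auto simp: KK_def\<close>)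
    also have "(0 + (\<Sum>j\<le>k. ((real j + 1) * (real (k-j) + 1)^2 / KK^2) * (c j * c (k-j)))) / (1 - 1/KK) = c (Suc k)"
    proof -
      have "1 - 1/KK \<noteq> 0" by (simp add: KK_def)
      then show ?thesis using abel_real[of k] by (simp add: KK_def)
    qed
    finally have "(\<lambda>m. A (Suc k) (m+3) / (real (Suc k) + 1)^(m+3)) \<longlonglongrightarrow> c (Suc k)"
      unfolding x_def KK_def by (simp add: add.commute)
    then have "(\<lambda>n. A (Suc k) n / (real (Suc k) + 1)^n) \<longlonglongrightarrow> c (Suc k)"
      by (rule LIMSEQ_offset)
    then show ?thesis using Suc by simp
  qed
qed

theorem theorem1p4:
  fixes k :: nat
  shows "(\<lambda>n. real_of_int (a_coeff k n)) \<sim>[sequentially]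
           (\<lambda>n. real (k + 1) ^ (k + n - 1) / fact (k + 1))"
proof (rule asymp_equivI')
  have ck: "c k > 0" by (simp add: c_def add_pos_nonneg)
  have L: "(\<lambda>n. (A k n / (real k + 1)^n) / c k) \<longlonglongrightarrow> c k / c k"
    by (intro tendsto_divide main_lim tendsto_const) (use ck in simp)
  have e: "(A k n / (real k + 1)^n) / c k = real_of_int (a_coeff k n) / (real (k + 1) ^ (k + n - 1) / fact (k + 1))"
    if n: "n \<ge> 1" for n
  proof -
    have p: "(real k + 1)^(k+n-1) * (real k + 1) = (real k + 1)^n * (real k + 1)^k"
      using n by (simp add: power_add[symmetric] power_Suc2[symmetric] add.commute)
    have q: "(real k + 1)^(k+n-1) = (real k + 1)^n * (real k + 1)^k / (real k + 1)"
      using p by (simp add: field_simps add_pos_nonneg)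
    have g: "a / b^n / (b^k / F / b) = a / (b^n * b^k / b / F)" if "b > 0" "F > 0" for a b F :: real
      using that by (simp add: field_simps)
    show ?thesis unfolding A_def c_def of_nat_add of_nat_1 q
      by (rule g) (simp_all add: add_pos_nonneg)
  qed
  have "\<forall>\<^sub>F n in sequentially. (A k n / (real k + 1)^n) / c k = real_of_int (a_coeff k n) / (real (k + 1) ^ (k + n - 1) / fact (k + 1))"
    by (rule eventually_sequentiallyI[of 1]) (rule e)
  from Lim_transform_eventually[OF L this] ck
  show "((\<lambda>n. real_of_int (a_coeff k n) / (real (k + 1) ^ (k + n - 1) / fact (k + 1))) \<longlongrightarrow> 1) sequentially"
    by simp
qed


end
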